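(* No rational prime $p\in\mathbb{Z}$ is a prime of $H_{1,2,2}$.
   Context: Let $\mathbf{i},\mathbf{j},\mathbf{k}$ be the standard quaternion units. $H_{1,2,2}$ is the subring of the quaternions equal to the $\mathbb{Z}$-module generated by $\mathbf{v}_1=1$, $\mathbf{v}_2=\mathbf{i}$, $\mathbf{v}_3=\tfrac12(1+\mathbf{i}+\sqrt2\,\mathbf{j})$, $\mathbf{v}_4=\tfrac12(1+\mathbf{i}+\sqrt2\,\mathbf{k})$. A unit is an element invertible in $H_{1,2,2}$. A prime of $H_{1,2,2}$ is a nonzero nonunit $\boldsymbol\pi$ such that whenever $\boldsymbol\pi=\mathbf{a}\mathbf{b}$ with $\mathbf{a},\mathbf{b}\in H_{1,2,2}$, at least one of $\mathbf{a},\mathbf{b}$ is a unit. *)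

theory Defs
  imports Complex_Main "HOL-Computational_Algebra.Primes"
begin

text \<open>Real quaternions a + b i + c j + d k, represented by their four real coordinates,
  with the Hamilton product (i^2 = j^2 = k^2 = ijk = -1).\<close>

datatype quat = Quat (qre: real) (qim_i: real) (qim_j: real) (qim_k: real)

definition qmult :: "quat \<Rightarrow> quat \<Rightarrow> quat" (infixl "\<star>" 70) where
  "qmult x y = Quat
     (qre x * qre y - qim_i x * qim_i y - qim_j x * qim_j y - qim_k x * qim_k y)
     (qre x * qim_i y + qim_i x * qre y + qim_j x * qim_k y - qim_k x * qim_j y)
     (qre x * qim_j y - qim_i x * qim_k y + qim_j x * qre y + qim_k x * qim_i y)
     (qre x * qim_k y + qim_i x * qim_j y - qim_j x * qim_i y + qim_k x * qre y)"

definition qadd :: "quat \<Rightarrow> quat \<Rightarrow> quat" where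
  "qadd x y = Quat (qre x + qre y) (qim_i x + qim_i y) (qim_j x + qim_j y) (qim_k x + qim_k y)"

definition qscale :: "int \<Rightarrow> quat \<Rightarrow> quat" where
  "qscale n x = Quat (of_int n * qre x) (of_int n * qim_i x) (of_int n * qim_j x) (of_int n * qim_k x)"

definition qzero :: quat where "qzero = Quat 0 0 0 0"
definition qone :: quat where "qone = Quat 1 0 0 0"

definition qint :: "int \<Rightarrow> quat" where "qint n = Quat (of_int n) 0 0 0"

definition v1 :: quat where "v1 = Quat 1 0 0 0"
definition v2 :: quat where "v2 = Quat 0 1 0 0"
definition v3 :: quat where "v3 = Quat (1/2) (1/2) (sqrt 2 / 2) 0"
definition v4 :: quat where "v4 = Quat (1/2) (1/2) 0 (sqrt 2 / 2)"

definition H122 :: "quat set" where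
  "H122 = {qadd (qadd (qscale a v1) (qscale b v2)) (qadd (qscale c v3) (qscale d v4)) | a b c d. True}"

definition H_unit :: "quat \<Rightarrow> bool" where
  "H_unit x \<longleftrightarrow> x \<in> H122 \<and> (\<exists>y\<in>H122. x \<star> y = qone \<and> y \<star> x = qone)"

definition H_prime :: "quat \<Rightarrow> bool" where
  "H_prime p \<longleftrightarrow> p \<in> H122 \<and> p \<noteq> qzero \<and> \<not> H_unit p \<and>
     (\<forall>a\<in>H122. \<forall>b\<in>H122. p = a \<star> b \<longrightarrow> H_unit a \<or> H_unit b)"

end

theory Submission
  imports Defs
begin

definition sos4 :: "int \<Rightarrow> bool" where
  "sos4 n \<longleftrightarrow> (\<exists>a b c d. n = a^2 + b^2 + c^2 + d^2)"

lemma no_mid_div: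
  fixes p m :: int
  assumes "prime p" "1 < m" "m < p" "m dvd p" shows False
proof -
  from assms(1) have "\<forall>k. k \<ge> 0 \<and> k dvd p \<longrightarrow> k = 1 \<or> k = p" by (simp add: prime_int_iff)
  moreover have "m \<ge> 0" using assms(2) by simp
  ultimately have "m = 1 \<or> m = p" using assms(4) by blast
  then show False using assms(2,3) by simp
qed

lemma centered:
  fixes m x :: int assumes "m > 0"
  shows "\<exists>y q. x = y + m * q \<and> - m \<le> 2 * y \<and> 2 * y < m"
proof -
  define q where "q = (2*x + m) div (2*m)"
  define s where "s = (2*x + m) mod (2*m)"
  have "2*x + m = 2*m*q + s" unfolding q_def s_def by simp
  moreover have "0 \<le> s" "s < 2*m" unfolding s_def using assms by auto
  ultimately show ?thesis
    by (intro exI[of _ "x - m*q"] exI[of _ q]) auto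
qed

lemma sq_bound:
  fixes m y :: int assumes "- m \<le> 2 * y" "2 * y < m"
  shows "(2*y)^2 \<le> m^2" and "(2*y)^2 = m^2 \<Longrightarrow> 2*y = -m"
proof -
  show "(2*y)^2 \<le> m^2" using assms
    by (subst power2_le_iff_abs_le) auto
next
  assume "(2*y)^2 = m^2"
  then have "(2*y-m)*(2*y+m) = 0" by (simp add: algebra_simps power2_eq_square)
  then have "2*y = m \<or> 2*y = -m" by auto
  then show "2*y = -m" using assms by auto
qed

lemma euler4:
  fixes x1 x2 x3 x4 y1 y2 y3 y4 :: int
  shows "(x1^2+x2^2+x3^2+x4^2)*(y1^2+y2^2+y3^2+y4^2) =
    (x1*y1+x2*y2+x3*y3+x4*y4)^2 + (x1*y2-x2*y1+x3*y4-x4*y3)^2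
    + (x1*y3-x3*y1+x4*y2-x2*y4)^2 + (x1*y4-x4*y1+x2*y3-x3*y2)^2"
  by algebra

lemma descent:
  fixes p m :: int
  assumes p: "prime p" and m: "1 < m" "m < p" and s: "sos4 (m*p)"
  shows "\<exists>r. 0 < r \<and> r < m \<and> sos4 (r*p)"
proof -
  obtain x1 x2 x3 x4 where x: "m*p = x1^2+x2^2+x3^2+x4^2" using s sos4_def by blast
  have m0: "m > 0" using m by simp
  obtain y1 q1 where 1: "x1 = y1 + m*q1" "- m \<le> 2 * y1" "2 * y1 < m" using centered[OF m0] by blast
  obtain y2 q2 where 2: "x2 = y2 + m*q2" "- m \<le> 2 * y2" "2 * y2 < m" using centered[OF m0] by blast
  obtain y3 q3 where 3: "x3 = y3 + m*q3" "- m \<le> 2 * y3" "2 * y3 < m" using centered[OF m0] by blast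
  obtain y4 q4 where 4: "x4 = y4 + m*q4" "- m \<le> 2 * y4" "2 * y4 < m" using centered[OF m0] by blast
  define r where "r = p - 2*(x1*q1+x2*q2+x3*q3+x4*q4) + m*(q1^2+q2^2+q3^2+q4^2)"
  have yr: "y1^2+y2^2+y3^2+y4^2 = m*r"
  proof -
    have "y1^2+y2^2+y3^2+y4^2 = (x1-m*q1)^2+(x2-m*q2)^2+(x3-m*q3)^2+(x4-m*q4)^2"
      using 1 2 3 4 by simp
    also have "\<dots> = (x1^2+x2^2+x3^2+x4^2) - 2*m*(x1*q1+x2*q2+x3*q3+x4*q4) + m^2*(q1^2+q2^2+q3^2+q4^2)"
      by (simp add: power2_eq_square algebra_simps)
    also have "\<dots> = m*r" unfolding r_def x[symmetric] by (simp add: power2_eq_square algebra_simps)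
    finally show ?thesis .
  qed
  have b1: "(2*y1)^2 \<le> m^2" "(2*y2)^2 \<le> m^2" "(2*y3)^2 \<le> m^2" "(2*y4)^2 \<le> m^2"
    using sq_bound(1) 1 2 3 4 by blast+
  have "4*(m*r) \<le> 4*(m*m)"
    using b1 unfolding yr[symmetric] by (simp add: power_mult_distrib power2_eq_square)
  then have rle: "r \<le> m" using m0 by simp
  have "0 \<le> m*r" unfolding yr[symmetric] by simp
  then have r0: "0 \<le> r" using m0 by (simp add: zero_le_mult_iff)
  have "r \<noteq> 0"
  proof
    assume "r = 0"
    then have "y1^2+y2^2+y3^2+y4^2 = 0" using yr by simp
    then have "y1^2 = 0 \<and> y2^2 = 0 \<and> y3^2 = 0 \<and> y4^2 = 0" using
      zero_le_power2[of y1] zero_le_power2[of y2] zero_le_power2[of y3] zero_le_power2[of y4] by linarith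
    then have "y1 = 0 \<and> y2 = 0 \<and> y3 = 0 \<and> y4 = 0" by simp
    then have "m*p = m*(m*(q1^2+q2^2+q3^2+q4^2))" using x 1 2 3 4
      by (simp add: power2_eq_square algebra_simps)
    then have "p = m*(q1^2+q2^2+q3^2+q4^2)" using m0 by simp
    then have "m dvd p" by simp
    then show False using no_mid_div p m by blast
  qed
  moreover have "r \<noteq> m"
  proof
    assume "r = m"
    then have "(2*y1)^2+(2*y2)^2+(2*y3)^2+(2*y4)^2 = 4*m^2" using yr
      by (simp add: power_mult_distrib power2_eq_square)
    then have "(2*y1)^2 = m^2 \<and> (2*y2)^2 = m^2 \<and> (2*y3)^2 = m^2 \<and> (2*y4)^2 = m^2"
      using b1 by linarith
    then have e: "2*y1 = -m" "2*y2 = -m" "2*y3 = -m" "2*y4 = -m"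
      using sq_bound(2) 1 2 3 4 by blast+
    have "4*(m*p) = (2*x1)^2+(2*x2)^2+(2*x3)^2+(2*x4)^2" using x by (simp add: power_mult_distrib)
    also have "\<dots> = (m*(2*q1-1))^2+(m*(2*q2-1))^2+(m*(2*q3-1))^2+(m*(2*q4-1))^2"
      using 1 2 3 4 e by (simp add: algebra_simps)
    also have "\<dots> = 4*(m*(m*((q1^2-q1)+(q2^2-q2)+(q3^2-q3)+(q4^2-q4)+1)))"
      by (simp add: power2_eq_square algebra_simps)
    finally have "p = m*((q1^2-q1)+(q2^2-q2)+(q3^2-q3)+(q4^2-q4)+1)" using m0 by simp
    then have "m dvd p" by simp
    then show False using no_mid_div p m by blast
  qed
  ultimately have rr: "0 < r" "r < m" using r0 rle by auto
  define w1 where "w1 = r + (q1*y1+q2*y2+q3*y3+q4*y4)"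
  define w2 where "w2 = q1*y2 - q2*y1 + q3*y4 - q4*y3"
  define w3 where "w3 = q1*y3 - q3*y1 + q4*y2 - q2*y4"
  define w4 where "w4 = q1*y4 - q4*y1 + q2*y3 - q3*y2"
  have z1: "x1*y1+x2*y2+x3*y3+x4*y4 = m*w1"
  proof -
    have "x1*y1+x2*y2+x3*y3+x4*y4 = (y1^2+y2^2+y3^2+y4^2) + m*(q1*y1+q2*y2+q3*y3+q4*y4)"
      using 1 2 3 4 by (simp add: power2_eq_square algebra_simps)
    then show ?thesis unfolding w1_def yr by (simp add: algebra_simps)
  qed
  have z2: "x1*y2-x2*y1+x3*y4-x4*y3 = m*w2" unfolding w2_def using 1 2 3 4 by (simp add: algebra_simps)
  have z3: "x1*y3-x3*y1+x4*y2-x2*y4 = m*w3" unfolding w3_def using 1 2 3 4 by (simp add: algebra_simps)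
  have z4: "x1*y4-x4*y1+x2*y3-x3*y2 = m*w4" unfolding w4_def using 1 2 3 4 by (simp add: algebra_simps)
  have "(m*p)*(m*r) = (x1^2+x2^2+x3^2+x4^2)*(y1^2+y2^2+y3^2+y4^2)" using x yr by simp
  also have "\<dots> = (m*w1)^2+(m*w2)^2+(m*w3)^2+(m*w4)^2" unfolding euler4 z1 z2 z3 z4 ..
  also have "\<dots> = m^2*(w1^2+w2^2+w3^2+w4^2)" by (simp only: power_mult_distrib distrib_left)
  finally have "m^2*(r*p) = m^2*(w1^2+w2^2+w3^2+w4^2)" by (simp add: power2_eq_square mult.assoc mult.left_commute mult.commute[of p r])
  then have "r*p = w1^2+w2^2+w3^2+w4^2" using m0 by simp
  then show ?thesis using rr sos4_def by blast
qed

lemma descent_all: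
  fixes p :: int assumes p: "prime p"
  shows "0 < m \<Longrightarrow> m < p \<Longrightarrow> sos4 (m*p) \<Longrightarrow> sos4 p"
proof (induction "nat m" arbitrary: m rule: less_induct)
  case less
  show ?case
  proof (cases "m = 1")
    case True then show ?thesis using less.prems by simp
  next
    case False
    then have "1 < m" using less.prems by simp
    then obtain r where "0 < r" "r < m" "sos4 (r*p)" using descent[OF p _ less.prems(2,3)] by blast
    then show ?thesis using less.hyps[of r] less.prems by simp
  qed
qed

lemma small_dvd_zero:
  fixes p a :: int assumes p: "prime p" shows "p dvd a \<Longrightarrow> \<bar>a\<bar> < p \<Longrightarrow> a = 0"
  using dvd_imp_le_int[of a p] p prime_gt_1_int[OF p] by force

lemma sq_inj:
  fixes p :: int assumes p: "prime p" and h: "2*h < p"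
  shows "inj_on (\<lambda>x. x^2 mod p) {0..h}"
proof (rule inj_onI)
  fix x y assume x: "x \<in> {0..h}" and y: "y \<in> {0..h}" and e: "x^2 mod p = y^2 mod p"
  then have "p dvd x^2 - y^2" by (simp add: mod_eq_dvd_iff)
  moreover have "x^2 - y^2 = (x-y)*(x+y)" by (simp add: algebra_simps power2_eq_square)
  ultimately have "p dvd (x-y) \<or> p dvd (x+y)" using p prime_dvd_mult_iff by metis
  moreover have "\<bar>x-y\<bar> < p" "0 \<le> x+y" "x+y < p" using x y h by auto
  ultimately show "x = y" using x y
    using small_dvd_zero[OF p] by (metis abs_of_nonneg add_nonneg_eq_0_iff atLeastAtMost_iff eq_iff_diff_eq_0)
qed

lemma neg_inj:
  fixes p :: int assumes p: "prime p" and h: "2*h < p"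
  shows "inj_on (\<lambda>y. (-1-y^2) mod p) {0..h}"
proof (rule inj_onI)
  fix x y assume x: "x \<in> {0..h}" and y: "y \<in> {0..h}" and e: "(-1-x^2) mod p = (-1-y^2) mod p"
  then have "p dvd (-1-x^2) - (-1-y^2)" by (simp add: mod_eq_dvd_iff)
  moreover have "(-1-x^2) - (-1-y^2) = y^2 - x^2" by simp
  ultimately have "y^2 mod p = x^2 mod p" by (simp add: mod_eq_dvd_iff)
  then show "x = y" using sq_inj[OF p h] x y by (metis inj_onD)
qed

lemma start:
  fixes p :: int assumes p: "prime p" and odd: "p \<noteq> 2"
  shows "\<exists>m. 0 < m \<and> m < p \<and> sos4 (m*p)"
proof -
  have p1: "p > 1" using prime_gt_1_int[OF p] .
  have "odd p" using p odd prime_odd_int[of p] p1 by simp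
  define h where "h = (p - 1) div 2"
  have hp: "2*h + 1 = p" unfolding h_def using \<open>odd p\<close> by (simp add: odd_two_times_div_two_succ)
  then have h2: "2*h < p" by simp
  define A where "A = (\<lambda>x. x^2 mod p) ` {0..h}"
  define B where "B = (\<lambda>y. (-1-y^2) mod p) ` {0..h}"
  have cA: "card A = nat (h+1)" unfolding A_def using card_image[OF sq_inj[OF p h2]] by simp
  have cB: "card B = nat (h+1)" unfolding B_def using card_image[OF neg_inj[OF p h2]] by simp
  have sub: "A \<union> B \<subseteq> {0..<p}" unfolding A_def B_def using p1 by auto
  have "A \<inter> B \<noteq> {}"
  proof
    assume "A \<inter> B = {}"
    then have "card (A \<union> B) = card A + card B"
      by (rule card_Un_disjoint[rotated 2]) (auto simp: A_def B_def)
    also have "\<dots> = nat p + 1" using cA cB hp p1 by (simp; presburger)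
    finally have "card (A \<union> B) = nat p + 1" .
    moreover have "card (A \<union> B) \<le> card {0..<p}" using sub by (intro card_mono) auto
    ultimately show False by simp
  qed
  then obtain z where "z \<in> A" "z \<in> B" by blast
  then obtain x y where x: "x \<in> {0..h}" and y: "y \<in> {0..h}" and e: "x^2 mod p = (-1-y^2) mod p"
  proof -
    from \<open>z \<in> A\<close> obtain x where "x \<in> {0..h}" "z = x^2 mod p" unfolding A_def by blast
    moreover from \<open>z \<in> B\<close> obtain y where "y \<in> {0..h}" "z = (-1-y^2) mod p" unfolding B_def by blast
    ultimately show ?thesis using that by metis
  qed
  then have "p dvd x^2 - (-1-y^2)" by (simp add: mod_eq_dvd_iff)
  then obtain m where m: "x^2 + y^2 + 1 = p * m" by (auto simp: dvd_def algebra_simps)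
  have "x^2 \<le> h^2" "y^2 \<le> h^2" using x y by (auto intro: power_mono)
  then have "p*m \<le> 2*h^2 + 1" using m by simp
  also have "\<dots> < p*p"
  proof -
    have "h \<ge> 1" using hp p1 by simp
    moreover have "p*p = 4*h^2+4*h+1" unfolding hp[symmetric] by (simp add: power2_eq_square algebra_simps)
    ultimately show ?thesis using zero_le_power2[of h] by linarith
  qed
  finally have "m < p" using p1 by simp
  moreover have "0 < p*m" using m zero_le_power2[of x] zero_le_power2[of y] by linarith
  then have "0 < m" using p1 by (simp add: zero_less_mult_iff)
  moreover have "sos4 (m*p)" unfolding sos4_def
    by (rule exI[of _ x], rule exI[of _ y], rule exI[of _ 1], rule exI[of _ 0]) (simp add: m mult.commute)
  ultimately show ?thesis by blast
qed

lemma prime_sos4: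
  fixes p :: int assumes p: "prime p" shows "\<exists>a b c d. p = a^2+b^2+c^2+d^2"
proof (cases "p = 2")
  case True then show ?thesis by (intro exI[of _ 1] exI[of _ 1] exI[of _ 0]) simp
next
  case False
  then obtain m where "0 < m" "m < p" "sos4 (m*p)" using start[OF p] by blast
  then have "sos4 p" using descent_all[OF p] by blast
  then show ?thesis unfolding sos4_def .
qed

definition qnorm :: "quat \<Rightarrow> real" where
  "qnorm x = qre x ^ 2 + qim_i x ^ 2 + qim_j x ^ 2 + qim_k x ^ 2"

definition qconj :: "quat \<Rightarrow> quat" where
  "qconj x = Quat (qre x) (- qim_i x) (- qim_j x) (- qim_k x)"

lemma quat_id:
  fixes a b c d e f g h :: real
  shows "(a * e - b * f - c * g - d * h)^2 + (a * f + b * e + c * h - d * g)^2 +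
        (a * g - b * h + c * e + d * f)^2 + (a * h + b * g - c * f + d * e)^2 =
        (a^2 + b^2 + c^2 + d^2) * (e^2 + f^2 + g^2 + h^2)"
  by (simp add: power2_eq_square algebra_simps)

lemma qnorm_mult: "qnorm (x \<star> y) = qnorm x * qnorm y"
  unfolding qnorm_def qmult_def by (simp add: quat_id)

lemma H122_gen:
  "qadd (qadd (qscale a v1) (qscale b v2)) (qadd (qscale c v3) (qscale d v4)) =
   Quat (of_int a + (of_int c + of_int d)/2) (of_int b + (of_int c + of_int d)/2) (of_int c * sqrt 2 / 2) (of_int d * sqrt 2 / 2)"
  unfolding qadd_def qscale_def v1_def v2_def v3_def v4_def by (simp add: field_simps)

lemma H122_elem:
  "x \<in> H122 \<longleftrightarrow> (\<exists>a b c d :: int. x = Quat (of_int a + (of_int c + of_int d)/2) (of_int b + (of_int c + of_int d)/2) (of_int c * sqrt 2 / 2) (of_int d * sqrt 2 / 2))"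
  unfolding H122_def H122_gen by blast

lemma H122_norm: assumes "x \<in> H122" shows "\<exists>n::int. qnorm x = of_int n"
proof -
  obtain a b c d :: int where x: "x = Quat (of_int a + (of_int c + of_int d)/2) (of_int b + (of_int c + of_int d)/2) (of_int c * sqrt 2 / 2) (of_int d * sqrt 2 / 2)"
    using assms H122_elem by blast
  have "qnorm x = of_int (a^2+b^2+(a+b)*(c+d)+c^2+d^2+c*d)"
    unfolding x qnorm_def by (simp add: power2_eq_square field_simps)
  then show ?thesis by blast
qed

lemma not_unit:
  assumes "x \<in> H122" "qnorm x = of_int p" "p > 1"
  shows "\<not> H_unit x"
proof
  assume "H_unit x"
  then obtain y where y: "y \<in> H122" "x \<star> y = qone" unfolding H_unit_def by blast
  obtain n :: int where n: "qnorm y = of_int n" using H122_norm[OF y(1)] by blast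
  have "qnorm (x \<star> y) = 1" using y(2) by (simp add: qone_def qnorm_def)
  then have "real_of_int (p * n) = 1" using qnorm_mult[of x y] assms(2) n by simp
  then have "p * n = 1" by linarith
  then show False using assms(3) pos_zmult_eq_1_iff_lemma[of p n] by simp
qed

theorem theorem36:
  fixes p :: int
  assumes "prime p"
  shows "\<not> H_prime (qint p)"
proof
  assume hp: "H_prime (qint p)"
  obtain A B u v where p: "p = A^2+B^2+u^2+v^2" using prime_sos4[OF assms] by blast
  have p1: "p > 1" using prime_gt_1_int[OF assms] .
  define x where "x = Quat A B ((u+v) * sqrt 2 / 2) ((u-v) * sqrt 2 / 2)"
  have xH: "x \<in> H122" unfolding H122_elem x_def
    by (rule exI[of _ "A-u"], rule exI[of _ "B-u"], rule exI[of _ "u+v"], rule exI[of _ "u-v"]) simp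
  have cH: "qconj x \<in> H122" unfolding H122_elem x_def qconj_def
    by (rule exI[of _ "A+u"], rule exI[of _ "u-B"], rule exI[of _ "-(u+v)"], rule exI[of _ "-(u-v)"]) (simp add: field_simps)
  have nx: "qnorm x = of_int p" unfolding x_def qnorm_def p by (simp add: power2_eq_square field_simps)
  have nc: "qnorm (qconj x) = of_int p" using nx unfolding qconj_def qnorm_def by simp
  have prod: "qint p = x \<star> qconj x" unfolding qint_def qmult_def qconj_def
    using nx unfolding qnorm_def by (simp add: power2_eq_square algebra_simps)
  show False using hp xH cH prod not_unit[OF xH nx p1] not_unit[OF cH nc p1]
    unfolding H_prime_def by blast
qed

end
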